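(* For almost every 2-agent zero-sum game (payoff matrix $A=A^{(12)}$, $A^{(21)}=-A^\top$) that has a unique Nash equilibrium and this equilibrium lies on the relative boundary of $\mathcal{X}$, there exists $\eta_0>0$ such that for every learning rate $\eta<\eta_0$ (used by both agents), when both agents update with Stochastic MWU, the strategy profile $X^t$ converges to the relative boundary of $\mathcal{X}$ (i.e., to the set of profiles in which some agent plays some pure strategy with probability $0$) with probability $1$.
   Context: Two agents with finite pure strategy sets $\mathcal{S}_1,\mathcal{S}_2$ and simplices of mixed strategies $\mathcal{X}_i=\{x_i\ge 0:\sum_{s_i}x_{is_i}=1\}$, $\mathcal{X}=\mathcal{X}_1\times\mathcal{X}_2$. Agent 1's expected payoff is $\langle x_1,Ax_2\rangle$ and agent 2's is $\langle x_2,-A^\top x_1\rangle$; write $A^{(12)}=A$, $A^{(21)}=-A^\top$. A Nash equilibrium is $x^*$ with $\langle x_i^*,A^{(ij)}x_j^*\rangle\ge\langle x_i,A^{(ij)}x_j^*\rangle$ for all $x_i\in\mathcal{X}_i$, $i\ne j$. "Almost every" refers to Lebesgue measure on payoff matrices. Stochastic MWU with learning rate $\eta$: given $X^t$, each agent $j$ independently samples a pure strategy $s_j$ with probability $X^t_{js_j}$, and then for each agent $i$ and $\hat s\in\mathcal{S}_i$, $X^{t+1}_{i\hat s}=\dfrac{X^t_{i\hat s}\exp(\eta\,\langle e_{\hat s},A^{(ij)}e_{s_j}\rangle)}{\sum_{\bar s\in\mathcal{S}_i}X^t_{i\bar s}\exp(\eta\,\langle e_{\bar s},A^{(ij)}e_{s_j}\rangle)}$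 ($j\ne i$). *)

theory Defs
  imports "HOL-Probability.Probability"
begin

text \<open>Pure strategies of agent 1 / agent 2 are the elements of the finite types 'm / 'n.
  The payoff matrix is A :: real^'n^'m, with entry A $ s1 $ s2.\<close>

definition mixed_strategies :: "(real^'a::finite) set" where
  "mixed_strategies = {x. (\<forall>i. 0 \<le> x $ i) \<and> (\<Sum>i\<in>UNIV. x $ i) = 1}"

definition profiles :: "((real^'m::finite) \<times> (real^'n::finite)) set" where
  "profiles = mixed_strategies \<times> mixed_strategies"

definition rel_boundary :: "((real^'m::finite) \<times> (real^'n::finite)) set" where
  "rel_boundary = {(x1, x2) \<in> profiles. (\<exists>i. x1 $ i = 0) \<or> (\<exists>j. x2 $ j = 0)}"

definition nash_eq :: "real^'n::finite^'m::finite \<Rightarrow> (real^'m) \<times> (real^'n) \<Rightarrow> bool" where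
  "nash_eq A x \<longleftrightarrow> x \<in> profiles \<and>
     (\<forall>y1\<in>mixed_strategies. y1 \<bullet> (A *v snd x) \<le> fst x \<bullet> (A *v snd x)) \<and>
     (\<forall>y2\<in>mixed_strategies. y2 \<bullet> ((- transpose A) *v fst x) \<le> snd x \<bullet> ((- transpose A) *v fst x))"

definition unique_boundary_NE :: "real^'n::finite^'m::finite \<Rightarrow> bool" where
  "unique_boundary_NE A \<longleftrightarrow> (\<exists>xs. {x. nash_eq A x} = {xs} \<and> xs \<in> rel_boundary)"

definition mwu_step :: "real \<Rightarrow> real^'n::finite^'m::finite \<Rightarrow> (real^'m) \<times> (real^'n)
                         \<Rightarrow> 'm \<times> 'n \<Rightarrow> (real^'m) \<times> (real^'n)" where
  "mwu_step \<eta> A x s =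
     ((\<chi> i. fst x $ i * exp (\<eta> * (A $ i $ snd s)) /
             (\<Sum>k\<in>UNIV. fst x $ k * exp (\<eta> * (A $ k $ snd s)))),
      (\<chi> j. snd x $ j * exp (\<eta> * (- (A $ fst s $ j))) /
             (\<Sum>k\<in>UNIV. snd x $ k * exp (\<eta> * (- (A $ fst s $ k))))))"

fun traj :: "real \<Rightarrow> real^'n::finite^'m::finite \<Rightarrow> (real^'m) \<times> (real^'n)
              \<Rightarrow> (nat \<Rightarrow> 'm \<times> 'n) \<Rightarrow> nat \<Rightarrow> (real^'m) \<times> (real^'n)" where
  "traj \<eta> A x0 h 0 = x0"
| "traj \<eta> A x0 h (Suc t) = mwu_step \<eta> A (traj \<eta> A x0 h t) (h t)"

definition sample_prob :: "(real^'m::finite) \<times> (real^'n::finite) \<Rightarrow> 'm \<times> 'n \<Rightarrow> real" where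
  "sample_prob x s = fst x $ fst s * snd x $ snd s"

text \<open>The sampled pure-strategy pairs s t form the stochastic MWU process started at x0:
  their joint law is determined by all finite-history (cylinder) probabilities,
  in which at time t both agents sample independently from the current profile X^t.\<close>
definition smwu_process :: "'w measure \<Rightarrow> real \<Rightarrow> real^'n::finite^'m::finite
        \<Rightarrow> (real^'m) \<times> (real^'n) \<Rightarrow> (nat \<Rightarrow> 'w \<Rightarrow> 'm \<times> 'n) \<Rightarrow> bool" where
  "smwu_process M \<eta> A x0 s \<longleftrightarrow> prob_space M \<and>
     (\<forall>t. s t \<in> measurable M (count_space UNIV)) \<and>
     (\<forall>t h. measure M {\<omega> \<in> space M. \<forall>k\<le>t. s k \<omega> = h k}
              = (\<Prod>k\<le>t. sample_prob (traj \<eta> A x0 h k) (h k)))"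

end

theory Submission
  imports Defs
begin

lemma farkas:
  fixes w :: "'k::finite \<Rightarrow> 'a::euclidean_space" and b :: 'a
  assumes nb: "\<not>(\<exists>l. (\<forall>k. 0 \<le> l k) \<and> b = (\<Sum>k\<in>UNIV. l k *\<^sub>R w k))"
  shows "\<exists>z. (\<forall>k. 0 \<le> z \<bullet> w k) \<and> z \<bullet> b < 0"
proof -
  define S where "S = {(\<Sum>k\<in>UNIV. l k *\<^sub>R w k) | l. \<forall>k. 0 \<le> l k}"
  have cS: "convex_cone S"
    unfolding convex_cone_iff
  proof (intro conjI ballI allI impI)
    show "0 \<in> S" unfolding S_def by (rule CollectI, rule exI[of _ "\<lambda>_. 0"]) simp
  next
    fix x y assume "x \<in> S" "y \<in> S"
    then obtain l1 l2 where l: "x = (\<Sum>k\<in>UNIV. l1 k *\<^sub>R w k)" "\<forall>k. 0 \<le> l1 k"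
       "y = (\<Sum>k\<in>UNIV. l2 k *\<^sub>R w k)" "\<forall>k. 0 \<le> l2 k" unfolding S_def by blast
    then have "x + y = (\<Sum>k\<in>UNIV. (l1 k + l2 k) *\<^sub>R w k)"
      by (simp add: scaleR_add_left sum.distrib)
    then show "x + y \<in> S" unfolding S_def using l by (auto intro!: exI[of _ "\<lambda>k. l1 k + l2 k"])
  next
    fix x and c :: real assume "x \<in> S" "0 \<le> c"
    then obtain l1 where l: "x = (\<Sum>k\<in>UNIV. l1 k *\<^sub>R w k)" "\<forall>k. 0 \<le> l1 k"
      unfolding S_def by blast
    then have "c *\<^sub>R x = (\<Sum>k\<in>UNIV. (c * l1 k) *\<^sub>R w k)"
      by (simp add: scaleR_sum_right)
    then show "c *\<^sub>R x \<in> S" unfolding S_def using l \<open>0 \<le> c\<close> by (auto intro!: exI[of _ "\<lambda>k. c * l1 k"])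
  qed
  have wS: "range w \<subseteq> S"
  proof
    fix x assume "x \<in> range w"
    then obtain k0 where x: "x = w k0" by blast
    have "(\<Sum>k\<in>UNIV. (if k = k0 then 1 else 0) *\<^sub>R w k) = w k0"
      by (simp add: if_distrib[of "\<lambda>c. c *\<^sub>R _"] cong: if_cong)
    then show "x \<in> S" unfolding S_def x by (auto intro!: exI[of _ "\<lambda>k. if k = k0 then 1 else 0"])
  qed
  define C where "C = convex_cone hull (range w)"
  have CS: "C \<subseteq> S" unfolding C_def using cS wS by (simp add: hull_minimal)
  have bC: "b \<notin> C" using CS nb unfolding S_def by blast
  have "closed C" unfolding C_def by (rule closed_convex_cone_hull) simp
  moreover have "convex C" unfolding C_def by (rule convex_convex_cone_hull)
  ultimately obtain a \<beta> where ab: "a \<bullet> b < \<beta>" "\<forall>x\<in>C. a \<bullet> x > \<beta>"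
    using separating_hyperplane_closed_point[OF _ _ bC] by blast
  have ccC: "convex_cone C" unfolding C_def by (rule convex_cone_convex_cone_hull)
  have "0 \<in> C" using ccC convex_cone_contains_0 by blast
  then have b0: "\<beta> < 0" using ab by force
  have "0 \<le> a \<bullet> w k" for k
  proof (rule ccontr)
    assume neg: "\<not> 0 \<le> a \<bullet> w k"
    have wC: "w k \<in> C" unfolding C_def by (simp add: hull_inc)
    define t where "t = \<beta> / (a \<bullet> w k)"
    have "0 \<le> t" unfolding t_def using neg b0 by (simp add: divide_nonpos_neg less_imp_le)
    then have "t *\<^sub>R w k \<in> C" using ccC wC convex_cone_scaleR by blast
    moreover have "a \<bullet> (t *\<^sub>R w k) = \<beta>" unfolding t_def using neg by simp
    ultimately show False using ab by force
  qed
  then show ?thesis using ab b0 by (intro exI[of _ a]) auto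
qed

lemma sum_UNIV_Plus:
  "sum f (UNIV :: ('a::finite + 'b::finite) set) = (\<Sum>a\<in>UNIV. f (Inl a)) + (\<Sum>b\<in>UNIV. f (Inr b))"
proof -
  have "x \<in> range Inl \<union> range Inr" for x :: "'a + 'b" by (cases x) auto
  then have "(UNIV :: ('a + 'b) set) = range Inl \<union> range Inr" by auto
  moreover have "sum f (range Inl \<union> range Inr) = sum f (range Inl) + sum f (range Inr)"
    by (rule sum.union_disjoint) auto
  ultimately have "sum f (UNIV :: ('a + 'b) set) = sum f (range Inl) + sum f (range Inr)"
    by simp
  also have "\<dots> = (\<Sum>a\<in>UNIV. f (Inl a)) + (\<Sum>b\<in>UNIV. f (Inr b))"
    by (simp add: sum.reindex)
  finally show ?thesis .
qed

lemma sum_UNIV_bool: "sum f (UNIV :: bool set) = f True + f False"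
  by (simp add: UNIV_bool add.commute)

definition gord_gen :: "real^'a::finite^'b::finite \<Rightarrow> 'a + bool \<Rightarrow> (real^'b) \<times> real" where
  "gord_gen M k = (case k of Inl j \<Rightarrow> ((\<chi> i. M$i$j), 1)
      | Inr b \<Rightarrow> (if b then (\<chi> i. 1) else (\<chi> i. -1), 0))"

lemma gordan:
  fixes M :: "real^'a::finite^'b::finite"
  shows "(\<exists>c::real^'b. (\<Sum>i\<in>UNIV. c$i) = 0 \<and> (\<forall>j. (\<Sum>i\<in>UNIV. c$i * M$i$j) < 0))
      \<or> (\<exists>y\<in>mixed_strategies. \<exists>\<beta>. \<forall>i. (M *v y)$i = \<beta>)"
proof (cases "\<exists>l. (\<forall>k. 0 \<le> l k) \<and> ((0::real^'b), (1::real)) =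
     (\<Sum>k\<in>UNIV. l k *\<^sub>R gord_gen M k)")
  case True
  then obtain l :: "'a + bool \<Rightarrow> real" where l0: "\<forall>k. 0 \<le> l k" and
    eq: "((0::real^'b), (1::real)) =
     (\<Sum>k\<in>UNIV. l k *\<^sub>R gord_gen M k)"
    by blast
  have eq2: "((0::real^'b), (1::real)) = (\<Sum>j\<in>UNIV. l (Inl j) *\<^sub>R ((\<chi> i. M$i$j), 1))
     + l (Inr True) *\<^sub>R ((\<chi> i. 1), 0) + l (Inr False) *\<^sub>R ((\<chi> i. -1), 0)"
    using eq by (simp add: sum_UNIV_Plus sum_UNIV_bool gord_gen_def)
  have s1: "(\<Sum>j\<in>UNIV. l (Inl j)) = 1"
    using arg_cong[OF eq2, of snd] by (simp add: snd_sum)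
  have s0: "(\<Sum>j\<in>UNIV. l (Inl j) * M$i$j) + l (Inr True) - l (Inr False) = 0" for i
    using arg_cong[OF eq2, of "\<lambda>p. fst p $ i"] by (simp add: fst_sum sum_component)
  define y where "y = (\<chi> j. l (Inl j))"
  have "y \<in> mixed_strategies" unfolding y_def mixed_strategies_def using l0 s1 by auto
  moreover have "\<forall>i. (M *v y)$i = l (Inr False) - l (Inr True)"
    using s0 unfolding y_def by (simp add: matrix_vector_mult_def algebra_simps)
  ultimately show ?thesis by blast
next
  case False
  from farkas[OF this] obtain z :: "(real^'b) \<times> real" where
    z: "\<forall>k. 0 \<le> z \<bullet> gord_gen M k"
     and zb: "z \<bullet> (0, 1) < 0" by blast
  obtain c r where zcr: "z = (c, r)" by fastforce
  have r: "r < 0" using zb zcr by simp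
  have "0 \<le> c \<bullet> (\<chi> i. 1)" using z[rule_format, of "Inr True"] zcr by (simp add: gord_gen_def)
  moreover have "0 \<le> c \<bullet> (\<chi> i. -1)" using z[rule_format, of "Inr False"] zcr by (simp add: gord_gen_def)
  ultimately have sc: "(\<Sum>i\<in>UNIV. c$i) = 0" by (simp add: inner_vec_def sum_negf)
  have cj: "0 \<le> (\<Sum>i\<in>UNIV. c$i * M$i$j) + r" for j
    using z[rule_format, of "Inl j"] zcr by (simp add: inner_vec_def gord_gen_def)
  have "(\<Sum>i\<in>UNIV. (-c)$i) = 0" using sc by (simp add: sum_negf)
  moreover have "\<forall>j. (\<Sum>i\<in>UNIV. (-c)$i * M$i$j) < 0"
    using cj r by (simp add: sum_negf) (smt (verit))
  ultimately show ?thesis by blast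
qed

definition gt_gen :: "real^'n::finite^'m::finite \<Rightarrow> 'm + 'n \<Rightarrow> real^'n" where
  "gt_gen B k = (case k of Inl i \<Rightarrow> B$i | Inr j \<Rightarrow> - axis j 1)"

lemma normalize_mixed:
  fixes x0 :: "real^'k::finite"
  assumes "\<forall>i. 0 \<le> x0$i" "0 < (\<Sum>i\<in>UNIV. x0$i)"
  shows "(1 / (\<Sum>i\<in>UNIV. x0$i)) *\<^sub>R x0 \<in> mixed_strategies"
  using assms unfolding mixed_strategies_def
  by (auto simp: sum_divide_distrib[symmetric])

lemma gt:
  fixes B :: "real^'n::finite^'m::finite" and i0 :: 'm
  shows "(\<exists>x\<in>mixed_strategies. 0 < x$i0 \<and> (\<forall>j. 0 \<le> (x v* B)$j))
       \<or> (\<exists>y\<in>mixed_strategies. (\<forall>i. (B *v y)$i \<le> 0) \<and> (B *v y)$i0 < 0)"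
proof (cases "\<exists>l. (\<forall>k. 0 \<le> l k) \<and> - (B$i0) = (\<Sum>k\<in>UNIV. l k *\<^sub>R gt_gen B k)")
  case True
  then obtain l :: "'m + 'n \<Rightarrow> real" where l0: "\<forall>k. 0 \<le> l k" and
    eq: "- (B$i0) = (\<Sum>k\<in>UNIV. l k *\<^sub>R gt_gen B k)" by blast
  have eqj: "- (B$i0$j) = (\<Sum>i\<in>UNIV. l (Inl i) * B$i$j) - l (Inr j)" for j
  proof -
    have "(- (B$i0))$j = (\<Sum>k\<in>UNIV. l k *\<^sub>R gt_gen B k) $ j" by (simp only: eq)
    then have "- (B$i0$j) = (\<Sum>k\<in>UNIV. l k *\<^sub>R gt_gen B k) $ j" by simp
    also have "\<dots> = (\<Sum>i\<in>UNIV. l (Inl i) * B$i$j) + (\<Sum>j'\<in>UNIV. - (l (Inr j') * axis j' 1 $ j))"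
      by (simp add: sum_component sum_UNIV_Plus gt_gen_def)
    also have "(\<Sum>j'\<in>UNIV. - (l (Inr j') * axis j' 1 $ j)) = - l (Inr j)"
      by (simp add: axis_def sum_negf if_distrib[of "\<lambda>c. l _ * c"] cong: if_cong)
    finally show ?thesis by simp
  qed
  define x0 where "x0 = (\<chi> i. l (Inl i) + (if i = i0 then 1 else 0))"
  have x0nn: "\<forall>i. 0 \<le> x0$i" unfolding x0_def using l0 by simp
  have "1 \<le> x0$i0" unfolding x0_def using l0 by simp
  moreover have "x0$i0 \<le> (\<Sum>i\<in>UNIV. x0$i)"
    using x0nn by (intro member_le_sum) auto
  ultimately have spos: "0 < (\<Sum>i\<in>UNIV. x0$i)" by simp
  define s where "s = (\<Sum>i\<in>UNIV. x0$i)"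
  define x where "x = (1 / s) *\<^sub>R x0"
  have "x \<in> mixed_strategies" unfolding x_def s_def by (rule normalize_mixed[OF x0nn spos])
  moreover have "0 < x$i0" unfolding x_def using \<open>1 \<le> x0$i0\<close> spos s_def by simp
  moreover have "0 \<le> (x v* B)$j" for j
  proof -
    have d1: "(\<Sum>i\<in>UNIV. B$i$j * (if i = i0 then 1 else 0)) = (\<Sum>i\<in>UNIV. if i = i0 then B$i$j else 0)"
      by (rule sum.cong) auto
    have "(x0 v* B)$j = (\<Sum>i\<in>UNIV. B$i$j * (l (Inl i) + (if i = i0 then 1 else 0)))"
      unfolding x0_def vector_matrix_mult_def by (simp add: mult.commute)
    also have "\<dots> = (\<Sum>i\<in>UNIV. B$i$j * l (Inl i)) + (\<Sum>i\<in>UNIV. B$i$j * (if i = i0 then 1 else 0))"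
      by (simp add: distrib_left sum.distrib)
    also have "\<dots> = (\<Sum>i\<in>UNIV. B$i$j * l (Inl i)) + B$i0$j"
      unfolding d1 by simp
    finally have "(x0 v* B)$j = (\<Sum>i\<in>UNIV. B$i$j * l (Inl i)) + B$i0$j" .
    also have "\<dots> = l (Inr j)" using eqj[of j] by (simp add: mult.commute)
    finally have "0 \<le> (x0 v* B)$j" using l0 by simp
    moreover have "(x v* B)$j = (x0 v* B)$j / s"
      unfolding x_def vector_matrix_mult_def by (simp add: sum_divide_distrib)
    ultimately show ?thesis using spos s_def by simp
  qed
  ultimately show ?thesis by blast
next
  case False
  from farkas[OF this] obtain z :: "real^'n" where
    z: "\<forall>k. 0 \<le> z \<bullet> gt_gen B k" and zb: "z \<bullet> (- (B$i0)) < 0" by blast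
  define y0 where "y0 = - z"
  have y0nn: "\<forall>j. 0 \<le> y0$j"
  proof
    fix j show "0 \<le> y0$j" using z[rule_format, of "Inr j"] unfolding y0_def
      by (simp add: gt_gen_def inner_axis)
  qed
  have By0: "(B *v y0)$i = - (z \<bullet> B$i)" for i
    unfolding y0_def by (simp add: matrix_vector_mul_component inner_commute)
  have By0le: "(B *v y0)$i \<le> 0" for i using z[rule_format, of "Inl i"] By0[of i]
    by (simp add: gt_gen_def)
  have By0lt: "(B *v y0)$i0 < 0" using zb By0[of i0] by simp
  have spos: "0 < (\<Sum>j\<in>UNIV. y0$j)"
  proof (rule ccontr)
    assume "\<not> 0 < (\<Sum>j\<in>UNIV. y0$j)"
    then have "(\<Sum>j\<in>UNIV. y0$j) = 0" using y0nn by (meson sum_nonneg not_less order.antisym)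
    then have "\<forall>j\<in>UNIV. y0$j = 0" using y0nn by (simp add: sum_nonneg_eq_0_iff)
    then have "y0 = 0" by (simp add: vec_eq_iff)
    then show False using By0lt by simp
  qed
  define s where "s = (\<Sum>j\<in>UNIV. y0$j)"
  define y where "y = (1 / s) *\<^sub>R y0"
  have "y \<in> mixed_strategies" unfolding y_def s_def by (rule normalize_mixed[OF y0nn spos])
  moreover have "(B *v y)$i = (B *v y0)$i / s" for i
    unfolding y_def matrix_vector_mult_def by (simp add: sum_divide_distrib)
  ultimately show ?thesis using By0le By0lt spos s_def
    by (intro disjI2 bexI[of _ y]) (auto simp: divide_nonpos_pos divide_neg_pos)
qed

lemma dot_le:
  assumes "y \<in> mixed_strategies" "\<forall>i. w$i \<le> K"
  shows "y \<bullet> w \<le> K"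
proof -
  have "y \<bullet> w = (\<Sum>i\<in>UNIV. y$i * w$i)" by (simp add: inner_vec_def)
  also have "\<dots> \<le> (\<Sum>i\<in>UNIV. y$i * K)"
    using assms by (intro sum_mono mult_left_mono) (auto simp: mixed_strategies_def)
  also have "\<dots> = K" using assms by (simp add: sum_distrib_right[symmetric] mixed_strategies_def)
  finally show ?thesis .
qed

lemma dot_ge:
  assumes "y \<in> mixed_strategies" "\<forall>i. K \<le> w$i"
  shows "K \<le> y \<bullet> w"
proof -
  have "K = (\<Sum>i\<in>UNIV. y$i * K)" using assms by (simp add: sum_distrib_right[symmetric] mixed_strategies_def)
  also have "\<dots> \<le> (\<Sum>i\<in>UNIV. y$i * w$i)"
    using assms by (intro sum_mono mult_left_mono) (auto simp: mixed_strategies_def)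
  also have "\<dots> = y \<bullet> w" by (simp add: inner_vec_def)
  finally show ?thesis .
qed

lemma neg_transpose_mv: "(- transpose A) *v (x::real^'m::finite) = - (x v* (A::real^'n::finite^'m))"
  by (simp add: vec_eq_iff matrix_vector_mult_def vector_matrix_mult_def transpose_def sum_negf mult.commute)

lemma ne_suff:
  fixes A :: "real^'n::finite^'m::finite"
  assumes x: "x \<in> mixed_strategies" and y: "y \<in> mixed_strategies"
    and r: "\<forall>i. (A *v y)$i \<le> K" and c: "\<forall>j. K \<le> (x v* A)$j"
  shows "nash_eq A (x, y)"
proof -
  have e: "x \<bullet> (A *v y) = y \<bullet> (x v* A)" by (simp add: dot_lmul_matrix[symmetric] inner_commute)
  have "x \<bullet> (A *v y) \<le> K" using dot_le[OF x r] .
  moreover have "K \<le> y \<bullet> (x v* A)" using dot_ge[OF y c] .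
  ultimately have v: "x \<bullet> (A *v y) = K" "y \<bullet> (x v* A) = K" using e by linarith+
  show ?thesis unfolding nash_eq_def profiles_def
  proof (intro conjI ballI)
    show "(x, y) \<in> mixed_strategies \<times> mixed_strategies" using x y by simp
  next
    fix y1 :: "real^'m" assume "y1 \<in> mixed_strategies"
    then show "y1 \<bullet> (A *v snd (x, y)) \<le> fst (x, y) \<bullet> (A *v snd (x, y))"
      using dot_le[OF _ r] v by simp
  next
    fix y2 :: "real^'n" assume "y2 \<in> mixed_strategies"
    then have "K \<le> y2 \<bullet> (x v* A)" using dot_ge[OF _ c] by simp
    then show "y2 \<bullet> (- transpose A *v fst (x, y)) \<le> snd (x, y) \<bullet> (- transpose A *v fst (x, y))"
      using v by (simp add: neg_transpose_mv)
  qed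
qed

lemma sum_shift: "(\<Sum>i\<in>UNIV. (a i - \<beta>) * (v::real^'k::finite)$i) = (\<Sum>i\<in>UNIV. a i * v$i) - \<beta> * (\<Sum>i\<in>UNIV. v$i)"
  by (simp add: left_diff_distrib sum_subtractf sum_distrib_left)

lemma sum_shift2: "(\<Sum>i\<in>UNIV. (v::real^'k::finite)$i * (a i - \<beta>)) = (\<Sum>i\<in>UNIV. v$i * a i) - \<beta> * (\<Sum>i\<in>UNIV. v$i)"
  using sum_shift[of a \<beta> v] by (simp add: mult.commute)

lemma key:
  fixes A :: "real^'n::finite^'m::finite"
  assumes u: "unique_boundary_NE A"
  shows "(\<exists>c::real^'m. (\<Sum>i\<in>UNIV. c$i) = 0 \<and> (\<forall>j. (\<Sum>i\<in>UNIV. c$i * A$i$j) < 0))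
       \<or> (\<exists>d::real^'n. (\<Sum>j\<in>UNIV. d$j) = 0 \<and> (\<forall>i. 0 < (\<Sum>j\<in>UNIV. A$i$j * d$j)))"
proof (rule ccontr)
  assume neg: "\<not> ?thesis"
  from gordan[of A] neg obtain y \<beta> where y: "y \<in> mixed_strategies" and yb: "\<forall>i. (A *v y)$i = \<beta>"
    by blast
  have "\<not> (\<exists>c::real^'n. (\<Sum>i\<in>UNIV. c$i) = 0 \<and> (\<forall>j. (\<Sum>i\<in>UNIV. c$i * transpose A$i$j) < 0))"
  proof
    assume "\<exists>c::real^'n. (\<Sum>i\<in>UNIV. c$i) = 0 \<and> (\<forall>j. (\<Sum>i\<in>UNIV. c$i * transpose A$i$j) < 0)"
    then obtain c :: "real^'n" where c: "(\<Sum>i\<in>UNIV. c$i) = 0" "\<forall>j. (\<Sum>i\<in>UNIV. c$i * transpose A$i$j) < 0"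
      by blast
    have "(\<Sum>j\<in>UNIV. (-c)$j) = 0" using c by (simp add: sum_negf)
    moreover have "\<forall>i. 0 < (\<Sum>j\<in>UNIV. A$i$j * (-c)$j)"
      using c(2) by (simp add: transpose_def sum_negf mult.commute)
    ultimately show False using neg by blast
  qed
  with gordan[of "transpose A"] obtain x \<alpha> where x: "x \<in> mixed_strategies"
    and xa0: "\<forall>j. (transpose A *v x)$j = \<alpha>" by blast
  have xa: "\<forall>j. (x v* A)$j = \<alpha>" using xa0 by simp
  have "x \<bullet> (A *v y) = \<beta>" using dot_le[OF x] dot_ge[OF x] yb by (simp add: order.antisym)
  moreover have "y \<bullet> (x v* A) = \<alpha>" using dot_le[OF y] dot_ge[OF y] xa by (simp add: order.antisym)
  ultimately have ab: "\<alpha> = \<beta>" by (simp add: dot_lmul_matrix[symmetric] inner_commute)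
  have ne: "nash_eq A (x, y)" using ne_suff[OF x y, of A \<beta>] yb xa ab by simp
  from u obtain xs where xs: "{p. nash_eq A p} = {xs}" "xs \<in> rel_boundary"
    unfolding unique_boundary_NE_def by blast
  have uniq: "p = (x, y)" if "nash_eq A p" for p
  proof -
    have "p \<in> {xs}" using that xs(1) by (metis mem_Collect_eq)
    moreover have "(x,y) \<in> {xs}" using ne xs(1) by (metis mem_Collect_eq)
    ultimately show ?thesis by simp
  qed
  have "xs \<in> {p. nash_eq A p}" using xs(1) by simp
  then have "xs = (x, y)" using uniq by simp
  then have "(x, y) \<in> rel_boundary" using xs(2) by simp
  then have bd: "(\<exists>i. x$i = 0) \<or> (\<exists>j. y$j = 0)" unfolding rel_boundary_def by blast
  define B where "B = (\<chi> i j. A$i$j - \<beta>)"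
  have Bmv: "(B *v v)$i = (A *v v)$i - \<beta>" if "v \<in> mixed_strategies" for v i
    using that unfolding B_def matrix_vector_mult_def mixed_strategies_def
    by (simp add: sum_shift)
  have Bvm: "(v v* B)$j = (v v* A)$j - \<beta>" if "v \<in> mixed_strategies" for v j
    using that unfolding B_def vector_matrix_mult_def mixed_strategies_def
    by (simp add: sum_shift2)
  from bd show False
  proof
    assume "\<exists>i. x$i = 0"
    then obtain i0 where i0: "x$i0 = 0" by blast
    from gt[of i0 B] show False
    proof
      assume "\<exists>x'\<in>mixed_strategies. 0 < x'$i0 \<and> (\<forall>j. 0 \<le> (x' v* B)$j)"
      then obtain x' where x': "x' \<in> mixed_strategies" "0 < x'$i0" "\<forall>j. 0 \<le> (x' v* B)$j" by blast
      have "\<forall>j. \<beta> \<le> (x' v* A)$j" using x' Bvm by fastforce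
      then have "nash_eq A (x', y)" using ne_suff[OF x'(1) y, of A \<beta>] yb by simp
      then have "x' = x" using uniq by blast
      then show False using x' i0 by simp
    next
      assume "\<exists>y'\<in>mixed_strategies. (\<forall>i. (B *v y')$i \<le> 0) \<and> (B *v y')$i0 < 0"
      then obtain y' where y': "y' \<in> mixed_strategies" "\<forall>i. (B *v y')$i \<le> 0" "(B *v y')$i0 < 0" by blast
      have "\<forall>i. (A *v y')$i \<le> \<beta>" using y' Bmv by fastforce
      then have "nash_eq A (x, y')" using ne_suff[OF x y'(1), of A \<beta>] xa ab by simp
      then have "y' = y" using uniq by blast
      then show False using y' Bmv[OF y, of i0] yb by simp
    qed
  next
    assume "\<exists>j. y$j = 0"
    then obtain j0 where j0: "y$j0 = 0" by blast
    define B' where "B' = (\<chi> j i. - (B$i$j))"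
    have B'vm: "(v v* B')$i = - ((B *v v)$i)" for v i
      unfolding B'_def vector_matrix_mult_def matrix_vector_mult_def
      by (simp add: sum_negf mult.commute)
    have B'mv: "(B' *v v)$j = - ((v v* B)$j)" for v j
      unfolding B'_def vector_matrix_mult_def matrix_vector_mult_def
      by (simp add: sum_negf mult.commute)
    from gt[of j0 B'] show False
    proof
      assume "\<exists>y'\<in>mixed_strategies. 0 < y'$j0 \<and> (\<forall>i. 0 \<le> (y' v* B')$i)"
      then obtain y' where y': "y' \<in> mixed_strategies" "0 < y'$j0" "\<forall>i. 0 \<le> (y' v* B')$i" by blast
      have "\<forall>i. (A *v y')$i \<le> \<beta>" using y' Bmv B'vm by fastforce
      then have "nash_eq A (x, y')" using ne_suff[OF x y'(1), of A \<beta>] xa ab by simp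
      then have "y' = y" using uniq by blast
      then show False using y' j0 by simp
    next
      assume "\<exists>x'\<in>mixed_strategies. (\<forall>j. (B' *v x')$j \<le> 0) \<and> (B' *v x')$j0 < 0"
      then obtain x' where x': "x' \<in> mixed_strategies" "\<forall>j. (B' *v x')$j \<le> 0" "(B' *v x')$j0 < 0" by blast
      have "\<forall>j. \<beta> \<le> (x' v* A)$j" using x' Bvm B'mv by fastforce
      then have "nash_eq A (x', y)" using ne_suff[OF x'(1) y, of A \<beta>] yb by simp
      then have "x' = x" using uniq by blast
      then show False using x' B'mv[of x' j0] Bvm[OF x, of j0] xa ab by simp
    qed
  qed
qed

lemma mixed_pos_ex:
  assumes "p \<in> mixed_strategies" shows "\<exists>k. 0 < (p::real^'k::finite)$k"
proof (rule ccontr)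
  assume "\<not> ?thesis"
  then have "\<forall>k. p$k \<le> 0" by (simp add: not_less)
  then have "\<forall>k. p$k = 0" using assms unfolding mixed_strategies_def by (auto intro: order.antisym)
  then show False using assms unfolding mixed_strategies_def by simp
qed

lemma Z_pos:
  assumes "p \<in> mixed_strategies" "\<forall>k. 0 < e k"
  shows "0 < (\<Sum>k\<in>UNIV. (p::real^'k::finite)$k * e k)"
proof -
  obtain k where k: "0 < p$k" using mixed_pos_ex[OF assms(1)] by blast
  have nn: "0 \<le> p$i * e i" for i
  proof -
    have "0 \<le> p$i" using assms(1) by (simp add: mixed_strategies_def)
    moreover have "0 \<le> e i" using assms(2) less_imp_le by blast
    ultimately show ?thesis by simp
  qed
  show ?thesis
    by (rule sum_pos2[of UNIV k]) (use assms k nn in auto)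
qed

lemma step_mixed:
  assumes "p \<in> mixed_strategies" "\<forall>k. 0 < e k"
  shows "(\<chi> i. (p::real^'k::finite)$i * e i / (\<Sum>k\<in>UNIV. p$k * e k)) \<in> mixed_strategies"
proof -
  have Z: "0 < (\<Sum>k\<in>UNIV. p$k * e k)" by (rule Z_pos[OF assms])
  show ?thesis unfolding mixed_strategies_def
    using Z assms by (auto simp: mixed_strategies_def sum_divide_distrib[symmetric] less_imp_le)
qed

lemma mixed_le1:
  assumes "p \<in> mixed_strategies" shows "(p::real^'k::finite)$i \<le> 1"
proof -
  have "p$i \<le> (\<Sum>k\<in>UNIV. p$k)" using assms unfolding mixed_strategies_def
    by (intro member_le_sum) auto
  then show ?thesis using assms unfolding mixed_strategies_def by simp
qed

lemma mwu_decay: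
  fixes p :: "nat \<Rightarrow> real^'k::finite" and g :: "nat \<Rightarrow> real^'k" and c :: "real^'k"
  assumes p0: "p 0 \<in> mixed_strategies"
    and rec: "\<And>t. p (Suc t) = (\<chi> i. p t $ i * exp (\<eta> * g t $ i) / (\<Sum>k\<in>UNIV. p t $ k * exp (\<eta> * g t $ k)))"
    and eta: "0 < \<eta>" and sc: "(\<Sum>i\<in>UNIV. c$i) = 0" and dl: "0 < \<delta>" and cg: "\<And>t. c \<bullet> g t \<le> - \<delta>"
  shows "(\<forall>t. p t \<in> mixed_strategies) \<and> (\<exists>idx b. b \<longlonglongrightarrow> 0 \<and> (\<forall>t. p t $ idx t \<le> b t))"
proof -
  have mix: "p t \<in> mixed_strategies" for t
  proof (induction t)
    case 0 then show ?case using p0 .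
  next
    case (Suc t) then show ?case unfolding rec by (intro step_mixed) auto
  qed
  have "\<exists>idx b. b \<longlonglongrightarrow> 0 \<and> (\<forall>t. p t $ idx t \<le> b t)"
  proof (cases "\<exists>i. p 0 $ i = 0")
    case True
    then obtain i where i: "p 0 $ i = 0" by blast
    have "p t $ i = 0" for t by (induction t) (use i in \<open>simp_all add: rec\<close>)
    then show ?thesis by (intro exI[of _ "\<lambda>_. i"] exI[of _ "\<lambda>_. 0"]) auto
  next
    case False
    have pos0: "\<forall>i. 0 < p 0 $ i"
    proof
      fix i
      have "0 \<le> p 0 $ i" using p0 unfolding mixed_strategies_def by simp
      moreover have "p 0 $ i \<noteq> 0" using False by blast
      ultimately show "0 < p 0 $ i" by simp
    qed
    have pos: "0 < p t $ i" for t i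
    proof (induction t arbitrary: i)
      case 0 then show ?case using pos0 by simp
    next
      case (Suc t)
      have "0 < (\<Sum>k\<in>UNIV. p t $ k * exp (\<eta> * g t $ k))" by (rule Z_pos[OF mix]) simp
      then show ?case unfolding rec using Suc by simp
    qed
    define W where "W t = (\<Sum>i\<in>UNIV. c$i * ln (p t $ i))" for t
    have Wstep: "W (Suc t) = W t + \<eta> * (c \<bullet> g t)" for t
    proof -
      define Z where "Z = (\<Sum>k\<in>UNIV. p t $ k * exp (\<eta> * g t $ k))"
      have Z: "0 < Z" unfolding Z_def by (rule Z_pos[OF mix]) simp
      have l: "ln (p (Suc t) $ i) = ln (p t $ i) + \<eta> * g t $ i - ln Z" for i
        unfolding rec Z_def[symmetric] using Z pos[of t i] by (simp add: ln_div ln_mult)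
      have "W (Suc t) = (\<Sum>i\<in>UNIV. c$i * ln (p t $ i) + \<eta> * (c$i * g t $ i) - c$i * ln Z)"
        unfolding W_def l by (simp add: algebra_simps)
      also have "\<dots> = W t + \<eta> * (\<Sum>i\<in>UNIV. c$i * g t $ i) - (\<Sum>i\<in>UNIV. c$i) * ln Z"
        unfolding W_def by (simp add: sum.distrib sum_subtractf sum_distrib_left sum_distrib_right)
      finally show ?thesis using sc by (simp add: inner_vec_def)
    qed
    have Wle: "W t \<le> W 0 - \<eta> * \<delta> * real t" for t
    proof (induction t)
      case 0 then show ?case by simp
    next
      case (Suc t)
      have "\<eta> * (c \<bullet> g t) \<le> \<eta> * (- \<delta>)" using cg[of t] eta by (intro mult_left_mono) auto
      then show ?case using Suc Wstep[of t] by (simp add: algebra_simps)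
    qed
    have "c \<noteq> 0" using cg[of 0] dl by auto
    then obtain i1 where "c$i1 \<noteq> 0" by (auto simp: vec_eq_iff)
    define C where "C = (\<Sum>i\<in>UNIV. \<bar>c$i\<bar>)"
    have Cpos: "0 < C" unfolding C_def
      by (rule sum_pos2[of UNIV i1]) (use \<open>c$i1 \<noteq> 0\<close> in auto)
    define idx where "idx t = (SOME i. \<forall>k. p t $ i \<le> p t $ k)" for t
    have idx: "\<forall>k. p t $ idx t \<le> p t $ k" for t
    proof -
      have "Min (range (\<lambda>k. p t $ k)) \<in> range (\<lambda>k. p t $ k)" by (rule Min_in) auto
      then obtain i where "p t $ i = Min (range (\<lambda>k. p t $ k))" by (metis rangeE)
      then have "\<forall>k. p t $ i \<le> p t $ k" by simp
      then show ?thesis unfolding idx_def by (rule someI)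
    qed
    have lnb: "C * ln (p t $ idx t) \<le> W t" for t
    proof -
      have "\<bar>c$i\<bar> * ln (p t $ idx t) \<le> c$i * ln (p t $ i)" for i
      proof (cases "0 \<le> c$i")
        case True
        have "ln (p t $ idx t) \<le> ln (p t $ i)" using idx[of t] pos[of t] by simp
        then show ?thesis using True by (simp add: mult_left_mono)
      next
        case False
        have "ln (p t $ idx t) \<le> 0" using mixed_le1[OF mix] pos[of t] by simp
        moreover have "ln (p t $ i) \<le> 0" using mixed_le1[OF mix] pos[of t] by simp
        ultimately show ?thesis using False
          by (smt (verit) mult_nonneg_nonpos mult_nonpos_nonpos)
      qed
      then have "(\<Sum>i\<in>UNIV. \<bar>c$i\<bar> * ln (p t $ idx t)) \<le> W t" unfolding W_def by (intro sum_mono) auto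
      then show ?thesis unfolding C_def by (simp add: sum_distrib_right)
    qed
    define b where "b t = exp (W 0 / C) * exp (- (\<eta> * \<delta> / C)) ^ t" for t
    have "p t $ idx t \<le> b t" for t
    proof -
      have "C * ln (p t $ idx t) \<le> W 0 - \<eta> * \<delta> * real t" using lnb[of t] Wle[of t] by simp
      then have "ln (p t $ idx t) \<le> (W 0 - \<eta> * \<delta> * real t) / C" using Cpos by (simp add: field_simps)
      also have "\<dots> = W 0 / C + real t * (- (\<eta> * \<delta> / C))" using Cpos by (simp add: field_simps)
      finally have "exp (ln (p t $ idx t)) \<le> exp (W 0 / C + real t * (- (\<eta> * \<delta> / C)))" by simp
      moreover have "exp (W 0 / C + real t * (- (\<eta> * \<delta> / C))) = b t"
        unfolding b_def by (simp only: exp_add exp_of_nat_mult)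
      ultimately show ?thesis using pos[of t] by simp
    qed
    moreover have "b \<longlonglongrightarrow> 0"
    proof -
      have "norm (exp (- (\<eta> * \<delta> / C))) < 1" using eta dl Cpos by simp
      then have "(\<lambda>t. exp (- (\<eta> * \<delta> / C)) ^ t) \<longlonglongrightarrow> 0" by (rule LIMSEQ_power_zero)
      then show ?thesis unfolding b_def by (rule tendsto_mult_right_zero)
    qed
    ultimately show ?thesis by blast
  qed
  then show ?thesis using mix by blast
qed

lemma move_mass:
  fixes x :: "real^'k::finite"
  assumes x: "x \<in> mixed_strategies" and xi: "x$i < 1"
  shows "\<exists>x'\<in>mixed_strategies. x'$i = 0 \<and> dist x x' \<le> 2 * x$i"
proof -
  obtain k where k: "k \<noteq> i"
  proof (cases "\<exists>k. k \<noteq> i")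
    case True then show ?thesis using that by blast
  next
    case False
    have e: "(UNIV :: 'k set) - {i} = {}" using False by auto
    have "(\<Sum>j\<in>UNIV. x$j) = x$i + (\<Sum>j\<in>UNIV-{i}. x$j)" by (rule sum.remove) auto
    then have "(\<Sum>j\<in>UNIV. x$j) = x$i" unfolding e by simp
    then show ?thesis using x xi unfolding mixed_strategies_def by simp
  qed
  define x' where "x' = x - x$i *\<^sub>R (axis i 1 - axis k 1)"
  have comp: "x'$j = (if j = i then 0 else if j = k then x$k + x$i else x$j)" for j
    unfolding x'_def using k by (auto simp: axis_def)
  have "x' \<in> mixed_strategies"
  proof -
    have "\<forall>j. 0 \<le> x'$j" using x unfolding comp mixed_strategies_def by (auto simp: add_nonneg_nonneg)
    moreover have "(\<Sum>j\<in>UNIV. x'$j) = 1"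
    proof -
      have "(\<Sum>j\<in>UNIV. x'$j) = (\<Sum>j\<in>UNIV. x$j) - x$i * ((\<Sum>j\<in>UNIV. axis i (1::real) $ j) - (\<Sum>j\<in>UNIV. axis k (1::real) $ j))"
        unfolding x'_def by (simp add: sum_subtractf sum_distrib_left right_diff_distrib)
      also have "\<dots> = 1" using x unfolding mixed_strategies_def by (simp add: axis_def)
      finally show ?thesis .
    qed
    ultimately show ?thesis unfolding mixed_strategies_def by simp
  qed
  moreover have "x'$i = 0" using comp by simp
  moreover have "dist x x' \<le> 2 * x$i"
  proof -
    have xi0: "0 \<le> x$i" using x unfolding mixed_strategies_def by simp
    have "dist x x' = norm (x$i *\<^sub>R (axis i (1::real) - axis k 1))" unfolding x'_def dist_norm by simp
    also have "\<dots> = x$i * norm (axis i (1::real) - axis k 1)" using xi0 by simp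
    also have "\<dots> \<le> x$i * 2"
    proof -
      have "norm (axis i (1::real) - axis k 1) \<le> norm (axis i (1::real)) + norm (axis k (1::real))"
        by (rule norm_triangle_ineq4)
      then show ?thesis using xi0 by (intro mult_left_mono) auto
    qed
    finally show ?thesis by simp
  qed
  ultimately show ?thesis by blast
qed

lemma infdist_bound1:
  assumes "(x1, x2) \<in> profiles" "x1$i < 1"
  shows "infdist (x1, x2) rel_boundary \<le> 2 * x1$i"
proof -
  have x1: "x1 \<in> mixed_strategies" and x2: "x2 \<in> mixed_strategies" using assms(1) unfolding profiles_def by auto
  obtain x' where x': "x' \<in> mixed_strategies" "x'$i = 0" "dist x1 x' \<le> 2 * x1$i"
    using move_mass[OF x1 assms(2)] by blast
  have "(x', x2) \<in> rel_boundary" unfolding rel_boundary_def profiles_def using x' x2 by auto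
  then have "infdist (x1, x2) rel_boundary \<le> dist (x1, x2) (x', x2)" by (rule infdist_le)
  also have "\<dots> = dist x1 x'" by (simp add: dist_Pair_Pair)
  finally show ?thesis using x' by simp
qed

lemma infdist_bound2:
  assumes "(x1, x2) \<in> profiles" "x2$j < 1"
  shows "infdist (x1, x2) rel_boundary \<le> 2 * x2$j"
proof -
  have x1: "x1 \<in> mixed_strategies" and x2: "x2 \<in> mixed_strategies" using assms(1) unfolding profiles_def by auto
  obtain x' where x': "x' \<in> mixed_strategies" "x'$j = 0" "dist x2 x' \<le> 2 * x2$j"
    using move_mass[OF x2 assms(2)] by blast
  have "(x1, x') \<in> rel_boundary" unfolding rel_boundary_def profiles_def using x' x1 by auto
  then have "infdist (x1, x2) rel_boundary \<le> dist (x1, x2) (x1, x')" by (rule infdist_le)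
  also have "\<dots> = dist x2 x'" by (simp add: dist_Pair_Pair)
  finally show ?thesis using x' by simp
qed

lemma traj_profiles:
  assumes "x0 \<in> profiles"
  shows "traj \<eta> A x0 h t \<in> profiles"
proof (induction t)
  case 0 then show ?case using assms by simp
next
  case (Suc t)
  then show ?case unfolding profiles_def
    by (auto simp: mwu_step_def intro!: step_mixed)
qed

lemma neg_unif:
  fixes f :: "'j::finite \<Rightarrow> real"
  assumes "\<forall>j. f j < 0"
  shows "\<exists>\<delta>>0. \<forall>j. f j \<le> - \<delta>"
proof -
  have "Max (range f) \<in> range f" by (rule Max_in) auto
  then have "Max (range f) < 0" using assms by auto
  moreover have mx: "f j \<le> Max (range f)" for j by (rule Max_ge) auto
  ultimately show ?thesis
  proof (intro exI[of _ "- Max (range f)"] conjI allI)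
    fix j show "f j \<le> - (- Max (range f))" unfolding minus_minus by (rule mx)
  qed simp
qed

lemma conv_from_bound:
  fixes X :: "nat \<Rightarrow> (real^'m::finite) \<times> (real^'n::finite)"
  assumes prof: "\<forall>t. X t \<in> profiles" and b: "b \<longlonglongrightarrow> 0"
    and bd: "\<And>t. b t < 1 \<Longrightarrow> infdist (X t) rel_boundary \<le> 2 * b t"
  shows "(\<lambda>t. infdist (X t) rel_boundary) \<longlonglongrightarrow> 0"
proof (rule tendsto_sandwich[of "\<lambda>_. 0" _ _ "\<lambda>t. 2 * b t"])
  show "\<forall>\<^sub>F t in sequentially. 0 \<le> infdist (X t) rel_boundary" by (simp add: infdist_nonneg)
  have "\<forall>\<^sub>F t in sequentially. b t < 1" using b by (rule order_tendstoD(2)) simp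
  then show "\<forall>\<^sub>F t in sequentially. infdist (X t) rel_boundary \<le> 2 * b t"
    by eventually_elim (rule bd)
  show "(\<lambda>t. 2 * b t) \<longlonglongrightarrow> 0" using tendsto_mult_right_zero[OF b] .
qed simp

lemma deterministic:
  fixes A :: "real^'n::finite^'m::finite"
  assumes u: "unique_boundary_NE A" and eta: "0 < \<eta>" and x0: "x0 \<in> profiles"
  shows "(\<lambda>t. infdist (traj \<eta> A x0 h t) rel_boundary) \<longlonglongrightarrow> 0"
proof -
  have prof: "\<forall>t. traj \<eta> A x0 h t \<in> profiles" using traj_profiles[OF x0] by blast
  from key[OF u] show ?thesis
  proof
    assume "\<exists>c::real^'m. (\<Sum>i\<in>UNIV. c$i) = 0 \<and> (\<forall>j. (\<Sum>i\<in>UNIV. c$i * A$i$j) < 0)"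
    then obtain c :: "real^'m" where c: "(\<Sum>i\<in>UNIV. c$i) = 0" "\<forall>j. (\<Sum>i\<in>UNIV. c$i * A$i$j) < 0"
      by blast
    obtain \<delta> where dl: "0 < \<delta>" "\<forall>j. (\<Sum>i\<in>UNIV. c$i * A$i$j) \<le> - \<delta>"
      using neg_unif[OF c(2)] by blast
    define p where "p t = fst (traj \<eta> A x0 h t)" for t
    define g where "g t = (\<chi> i. A$i$snd (h t))" for t
    have p0: "p 0 \<in> mixed_strategies" using x0 unfolding p_def profiles_def by auto
    have rec: "p (Suc t) = (\<chi> i. p t $ i * exp (\<eta> * g t $ i) / (\<Sum>k\<in>UNIV. p t $ k * exp (\<eta> * g t $ k)))" for t
      unfolding p_def g_def by (simp add: mwu_step_def)
    have cg: "c \<bullet> g t \<le> - \<delta>" for t using dl(2) unfolding g_def by (simp add: inner_vec_def)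
    from mwu_decay[OF p0 rec eta c(1) dl(1) cg] obtain idx b where
      b: "b \<longlonglongrightarrow> 0" "\<forall>t. p t $ idx t \<le> b t" by blast
    show ?thesis
    proof (rule conv_from_bound[OF prof b(1)])
      fix t assume "b t < 1"
      then have lt: "p t $ idx t < 1" using b(2) by (meson le_less_trans)
      obtain y1 y2 where yy: "traj \<eta> A x0 h t = (y1, y2)" by fastforce
      have "infdist (y1, y2) rel_boundary \<le> 2 * y1 $ idx t"
        using infdist_bound1[of y1 y2 "idx t"] prof[rule_format, of t] lt yy unfolding p_def by simp
      then show "infdist (traj \<eta> A x0 h t) rel_boundary \<le> 2 * b t"
        using b(2) yy unfolding p_def by (smt (verit) fst_conv)
    qed
  next
    assume "\<exists>d::real^'n. (\<Sum>j\<in>UNIV. d$j) = 0 \<and> (\<forall>i. 0 < (\<Sum>j\<in>UNIV. A$i$j * d$j))"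
    then obtain d :: "real^'n" where d: "(\<Sum>j\<in>UNIV. d$j) = 0" "\<forall>i. 0 < (\<Sum>j\<in>UNIV. A$i$j * d$j)"
      by blast
    have "\<forall>i. - (\<Sum>j\<in>UNIV. A$i$j * d$j) < 0" using d(2) by simp
    from neg_unif[OF this] obtain \<delta> where dl: "0 < \<delta>" "\<forall>i. - (\<Sum>j\<in>UNIV. A$i$j * d$j) \<le> - \<delta>"
      by blast
    define p where "p t = snd (traj \<eta> A x0 h t)" for t
    define g where "g t = (\<chi> j. - (A$fst (h t)$j))" for t
    have p0: "p 0 \<in> mixed_strategies" using x0 unfolding p_def profiles_def by auto
    have rec: "p (Suc t) = (\<chi> i. p t $ i * exp (\<eta> * g t $ i) / (\<Sum>k\<in>UNIV. p t $ k * exp (\<eta> * g t $ k)))" for t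
      unfolding p_def g_def by (simp add: mwu_step_def)
    have cg: "d \<bullet> g t \<le> - \<delta>" for t
    proof -
      have "d \<bullet> g t = - (\<Sum>j\<in>UNIV. A$fst (h t)$j * d$j)"
        unfolding g_def by (simp add: inner_vec_def sum_negf mult.commute)
      then show ?thesis using dl(2) by simp
    qed
    from mwu_decay[OF p0 rec eta d(1) dl(1) cg] obtain idx b where
      b: "b \<longlonglongrightarrow> 0" "\<forall>t. p t $ idx t \<le> b t" by blast
    show ?thesis
    proof (rule conv_from_bound[OF prof b(1)])
      fix t assume "b t < 1"
      then have lt: "p t $ idx t < 1" using b(2) by (meson le_less_trans)
      obtain y1 y2 where yy: "traj \<eta> A x0 h t = (y1, y2)" by fastforce
      have "infdist (y1, y2) rel_boundary \<le> 2 * y2 $ idx t"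
        using infdist_bound2[of y1 y2 "idx t"] prof[rule_format, of t] lt yy unfolding p_def by simp
      then show "infdist (traj \<eta> A x0 h t) rel_boundary \<le> 2 * b t"
        using b(2) yy unfolding p_def by (smt (verit) snd_conv)
    qed
  qed
qed

theorem theorem3:
  shows "AE A in (lebesgue :: (real^'n::finite^'m::finite) measure).
    unique_boundary_NE A \<longrightarrow>
    (\<exists>\<eta>0>0. \<forall>\<eta>. 0 < \<eta> \<and> \<eta> < \<eta>0 \<longrightarrow>
      (\<forall>x0 \<in> profiles. \<forall>(M :: 'w measure) s. smwu_process M \<eta> A x0 s \<longrightarrow>
         (AE \<omega> in M. ((\<lambda>t. infdist (traj \<eta> A x0 (\<lambda>k. s k \<omega>) t) rel_boundary) \<longlonglongrightarrow> 0))))"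
proof (rule AE_I2, intro impI)
  fix A :: "real^'n^'m" assume u: "unique_boundary_NE A"
  show "\<exists>\<eta>0>0. \<forall>\<eta>. 0 < \<eta> \<and> \<eta> < \<eta>0 \<longrightarrow>
      (\<forall>x0 \<in> profiles. \<forall>(M :: 'w measure) s. smwu_process M \<eta> A x0 s \<longrightarrow>
         (AE \<omega> in M. ((\<lambda>t. infdist (traj \<eta> A x0 (\<lambda>k. s k \<omega>) t) rel_boundary) \<longlonglongrightarrow> 0)))"
    using deterministic[OF u] by (intro exI[of _ 1]) (auto intro!: AE_I2)
qed

end
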